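(* Let $\mathbf p\sim\mathrm{DGEM}(M)$ and let $X_1,X_2\in\mathcal X$. Conditionally on $\mathbf p$, let $Y_{1,1}$ and $Y_{1,2}$ be independent with $\mathbb P(Y_{1,1}=j\mid\mathbf p)=p_j(X_1)$ and $\mathbb P(Y_{1,2}=j\mid\mathbf p)=p_j(X_2)$ for $j\ge1$. Let $\mu_M=\mu_M(X_1,X_2)=(M+1)^2\,\mathbb E\big(V(X_1)V(X_2)\big)$, where $V=V_1$ is one of the Beta processes of the construction. Then for positive integers $j\ne k$, $$\mathbb P(Y_{1,1}=j,Y_{1,2}=k)=\frac{(M+1-\mu_M)\,M^{|j-k|-1}\,(M^2-1+\mu_M)^{\min(j,k)-1}}{(M+1)^{j+k}},$$ and for every positive integer $j$, $$\mathbb P(Y_{1,1}=j,Y_{1,2}=j)=\frac{\mu_M\,(M^2-1+\mu_M)^{j-1}}{(M+1)^{2j}}.$$ Consequently $\mathbb P(Y_{1,1}=Y_{1,2})=\dfrac{\mu_M}{2M+2-\mu_M}$.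
   Context: Dependent GEM prior $\mathrm{DGEM}(M)$: let $\mathcal X\subset\mathbb R$ be the covariate space, $M>0$, $\sigma_Z>0$, and let $\tilde K_\lambda$ be a normalized covariance function on $\mathcal X$ (i.e. $\tilde K_\lambda(X,X)=1$) depending only on $X_1-X_2$, e.g. squared exponential $\exp(-(X_1-X_2)^2/(2\lambda^2))$, Ornstein–Uhlenbeck $\exp(-|X_1-X_2|/\lambda)$ or rational quadratic $(1+(X_1-X_2)^2/(2\lambda^2))^{-1}$. Let $Z_1,Z_2,\dots$ be i.i.d. centered Gaussian processes on $\mathcal X$ with covariance $\sigma_Z^2\tilde K_\lambda$. Let $\Phi_{\sigma_Z}$ be the CDF of $\mathcal N(0,\sigma_Z^2)$ and $F_M^{-1}(u)=1-(1-u)^{1/M}$ the inverse CDF of the $\mathrm{Beta}(1,M)$ distribution. Set $V_j(X)=F_M^{-1}(\Phi_{\sigma_Z}(Z_j(X)))$ (so each $V_j(X)\sim\mathrm{Beta}(1,M)$), and define by stick-breaking $p_1(X)=V_1(X)$, $p_j(X)=V_j(X)\prod_{l<j}(1-V_l(X))$ for $j>1$. *)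

theory Defs
  imports "HOL-Probability.Probability"
begin

definition centered_gaussian_process ::
  "'a measure \<Rightarrow> real set \<Rightarrow> (real \<Rightarrow> 'a \<Rightarrow> real) \<Rightarrow> (real \<Rightarrow> real \<Rightarrow> real) \<Rightarrow> bool" where
  "centered_gaussian_process M S Z C \<longleftrightarrow>
     (\<forall>x\<in>S. Z x \<in> borel_measurable M) \<and>
     (\<forall>xs cs. set xs \<subseteq> S \<longrightarrow> length cs = length xs \<longrightarrow>
        (let L = (\<lambda>\<omega>. \<Sum>i<length xs. cs ! i * Z (xs ! i) \<omega>);
             v = (\<Sum>i<length xs. \<Sum>l<length xs. cs ! i * cs ! l * C (xs ! i) (xs ! l))
         in if v = 0 then (AE \<omega> in M. L \<omega> = 0)
            else distributed M lborel L (normal_density 0 (sqrt v))))"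

definition Phi_normal :: "real \<Rightarrow> real \<Rightarrow> real" where
  "Phi_normal \<sigma> z = cdf (density lborel (normal_density 0 \<sigma>)) z"

text \<open>Inverse CDF of Beta(1,M).\<close>
definition beta1_inv_cdf :: "real \<Rightarrow> real \<Rightarrow> real" where
  "beta1_inv_cdf M u = 1 - (1 - u) powr (1 / M)"

definition dgem_V :: "real \<Rightarrow> real \<Rightarrow> (nat \<Rightarrow> real \<Rightarrow> 'a \<Rightarrow> real) \<Rightarrow> nat \<Rightarrow> real \<Rightarrow> 'a \<Rightarrow> real" where
  "dgem_V M \<sigma> Z j x \<omega> = beta1_inv_cdf M (Phi_normal \<sigma> (Z j x \<omega>))"

text \<open>Stick-breaking weights, indices j \<ge> 1.\<close>
definition dgem_p :: "real \<Rightarrow> real \<Rightarrow> (nat \<Rightarrow> real \<Rightarrow> 'a \<Rightarrow> real) \<Rightarrow> nat \<Rightarrow> real \<Rightarrow> 'a \<Rightarrow> real" where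
  "dgem_p M \<sigma> Z j x \<omega> = dgem_V M \<sigma> Z j x \<omega> * (\<Prod>l\<in>{1..<j}. (1 - dgem_V M \<sigma> Z l x \<omega>))"

definition dgem_sigma :: "'a measure \<Rightarrow> real \<Rightarrow> real \<Rightarrow> (nat \<Rightarrow> real \<Rightarrow> 'a \<Rightarrow> real) \<Rightarrow> real set \<Rightarrow> 'a set set" where
  "dgem_sigma P M \<sigma> Z S = sigma_sets (space P)
     {{\<omega> \<in> space P. dgem_p M \<sigma> Z j x \<omega> \<in> B} | j x B. j \<ge> 1 \<and> x \<in> S \<and> B \<in> sets borel}"

end

theory Submission
  imports Defs
begin


lemma tilt:
  fixes P :: "'a measure" and W W' X X' :: "'a \<Rightarrow> real"
  assumes P: "prob_space P"
    and mW[measurable]: "W \<in> borel_measurable P" "W' \<in> borel_measurable P"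
    and mX[measurable]: "X \<in> borel_measurable P" "X' \<in> borel_measurable P"
    and bW: "\<And>\<omega>. \<omega> \<in> space P \<Longrightarrow> 1 \<le> W \<omega> \<and> W \<omega> \<le> c"
    and bW': "\<And>\<omega>. \<omega> \<in> space P \<Longrightarrow> 1 \<le> W' \<omega> \<and> W' \<omega> \<le> c"
    and ch: "\<And>t. (CLINT \<omega>|P. W \<omega> *\<^sub>R iexp (t * X \<omega>)) = (CLINT \<omega>|P. W' \<omega> *\<^sub>R iexp (t * X' \<omega>))"
    and mh[measurable]: "h \<in> borel_measurable borel" and bh: "\<And>x. \<bar>h x\<bar> \<le> d"
  shows "(\<integral>\<omega>. W \<omega> * h (X \<omega>) \<partial>P) = (\<integral>\<omega>. W' \<omega> * h (X' \<omega>) \<partial>P)"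
proof -
  interpret prob_space P by (rule P)
  have intW: "integrable P W" "integrable P W'"
    using bW bW' by (auto intro!: integrable_const_bound[where B=c] AE_I2 simp del: AE_I2) (smt (verit) bW bW')+
  have "(CLINT \<omega>|P. W \<omega> *\<^sub>R iexp (0 * X \<omega>)) = complex_of_real (\<integral>\<omega>. W \<omega> \<partial>P)"
    by (simp add: scaleR_conv_of_real)
  moreover have "(CLINT \<omega>|P. W' \<omega> *\<^sub>R iexp (0 * X' \<omega>)) = complex_of_real (\<integral>\<omega>. W' \<omega> \<partial>P)"
    by (simp add: scaleR_conv_of_real)
  ultimately have aeq: "(\<integral>\<omega>. W \<omega> \<partial>P) = (\<integral>\<omega>. W' \<omega> \<partial>P)"
    using ch[of 0] by simp
  define a where "a = (\<integral>\<omega>. W \<omega> \<partial>P)"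
  have a1: "a \<ge> 1"
  proof -
    have "(\<integral>\<omega>. 1 \<partial>P) \<le> a" unfolding a_def
      using bW intW by (intro integral_mono) auto
    then show ?thesis by (simp add: prob_space)
  qed
  have key: "\<And>V (Y::'a\<Rightarrow>real). V \<in> borel_measurable P \<Longrightarrow> Y \<in> borel_measurable P \<Longrightarrow>
      (\<And>\<omega>. \<omega> \<in> space P \<Longrightarrow> 1 \<le> V \<omega> \<and> V \<omega> \<le> c) \<Longrightarrow> (\<integral>\<omega>. V \<omega> \<partial>P) = a \<Longrightarrow>
      real_distribution (distr (density P (\<lambda>\<omega>. V \<omega> / a)) borel Y) \<and>
      (\<forall>t. char (distr (density P (\<lambda>\<omega>. V \<omega> / a)) borel Y) t = (CLINT \<omega>|P. V \<omega> *\<^sub>R iexp (t * Y \<omega>)) / a) \<and>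
      (\<integral>x. h x \<partial>distr (density P (\<lambda>\<omega>. V \<omega> / a)) borel Y) = (\<integral>\<omega>. V \<omega> * h (Y \<omega>) \<partial>P) / a"
  proof -
    fix V Y :: "'a \<Rightarrow> real" assume [measurable]: "V \<in> borel_measurable P" "Y \<in> borel_measurable P"
      and bV: "\<And>\<omega>. \<omega> \<in> space P \<Longrightarrow> 1 \<le> V \<omega> \<and> V \<omega> \<le> c" and Va: "(\<integral>\<omega>. V \<omega> \<partial>P) = a"
    have intV: "integrable P V" using bV by (auto intro!: integrable_const_bound[where B=c] AE_I2) (smt (verit) bV)
    have nn: "\<And>\<omega>. \<omega> \<in> space P \<Longrightarrow> 0 \<le> V \<omega> / a" by (metis bV a1 divide_nonneg_nonneg order_trans zero_le_one)
    have "prob_space (density P (\<lambda>\<omega>. V \<omega> / a))"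
    proof (rule prob_spaceI)
      have "(\<integral>\<^sup>+\<omega>. ennreal (V \<omega> / a) \<partial>P) = ennreal (\<integral>\<omega>. V \<omega> / a \<partial>P)"
        using nn intV by (intro nn_integral_eq_integral) auto
      also have "\<dots> = 1" using Va a1 by simp
      finally show "emeasure (density P (\<lambda>\<omega>. V \<omega> / a)) (space (density P (\<lambda>\<omega>. V \<omega> / a))) = 1"
        by (simp add: emeasure_density)
    qed
    then have rd: "real_distribution (distr (density P (\<lambda>\<omega>. V \<omega> / a)) borel Y)"
      by (auto simp: real_distribution_def real_distribution_axioms_def intro!: prob_space.prob_space_distr)
    have ch: "char (distr (density P (\<lambda>\<omega>. V \<omega> / a)) borel Y) t = (CLINT \<omega>|P. V \<omega> *\<^sub>R iexp (t * Y \<omega>)) / a" for t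
    proof -
      have "char (distr (density P (\<lambda>\<omega>. V \<omega> / a)) borel Y) t
          = (CLINT \<omega>|density P (\<lambda>\<omega>. V \<omega> / a). iexp (t * Y \<omega>))"
        unfolding char_def by (subst integral_distr) auto
      also have "\<dots> = (CLINT \<omega>|P. (V \<omega> / a) *\<^sub>R iexp (t * Y \<omega>))"
        using nn by (subst integral_density) (auto intro!: AE_I2)
      also have "\<dots> = (CLINT \<omega>|P. (1 / a) *\<^sub>R (V \<omega> *\<^sub>R iexp (t * Y \<omega>)))"
        by (intro Bochner_Integration.integral_cong) auto
      also have "\<dots> = (1 / a) *\<^sub>R (CLINT \<omega>|P. V \<omega> *\<^sub>R iexp (t * Y \<omega>))"
        by (rule integral_scaleR_right)
      finally show ?thesis by (simp add: scaleR_conv_of_real divide_inverse_commute)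
    qed
    have hh: "(\<integral>x. h x \<partial>distr (density P (\<lambda>\<omega>. V \<omega> / a)) borel Y) = (\<integral>\<omega>. V \<omega> * h (Y \<omega>) \<partial>P) / a"
    proof -
      have "(\<integral>x. h x \<partial>distr (density P (\<lambda>\<omega>. V \<omega> / a)) borel Y)
          = (\<integral>\<omega>. h (Y \<omega>) \<partial>density P (\<lambda>\<omega>. V \<omega> / a))"
        by (subst integral_distr) auto
      also have "\<dots> = (\<integral>\<omega>. (V \<omega> / a) * h (Y \<omega>) \<partial>P)"
        using nn by (subst integral_density) (auto intro!: AE_I2)
      also have "\<dots> = (\<integral>\<omega>. V \<omega> * h (Y \<omega>) \<partial>P) / a"
        by (simp add: mult.commute mult.left_commute)
      finally show ?thesis .
    qed
    show "real_distribution (distr (density P (\<lambda>\<omega>. V \<omega> / a)) borel Y) \<and>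
      (\<forall>t. char (distr (density P (\<lambda>\<omega>. V \<omega> / a)) borel Y) t = (CLINT \<omega>|P. V \<omega> *\<^sub>R iexp (t * Y \<omega>)) / a) \<and>
      (\<integral>x. h x \<partial>distr (density P (\<lambda>\<omega>. V \<omega> / a)) borel Y) = (\<integral>\<omega>. V \<omega> * h (Y \<omega>) \<partial>P) / a"
      using rd ch hh by blast
  qed
  note k1 = key[OF mW(1) mX(1) bW a_def[symmetric]]
  note k2 = key[OF mW(2) mX(2) bW' aeq[folded a_def, symmetric]]
  have "distr (density P (\<lambda>\<omega>. W \<omega> / a)) borel X = distr (density P (\<lambda>\<omega>. W' \<omega> / a)) borel X'"
    using k1 k2 ch by (intro Levy_uniqueness ext) auto
  then have "(\<integral>\<omega>. W \<omega> * h (X \<omega>) \<partial>P) / a = (\<integral>\<omega>. W' \<omega> * h (X' \<omega>) \<partial>P) / a"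
    using k1 k2 by metis
  then show ?thesis using a1 by simp
qed
lemma iexp_cs: "iexp x = complex_of_real (cos x) + \<i> * complex_of_real (sin x)"
  by (simp add: exp_Euler cos_of_real sin_of_real)
lemma iexp_cos_id: "(2 + cos x) *\<^sub>R iexp y = 2 * iexp y + iexp (x + y) / 2 + iexp (- x + y) / 2"
  unfolding iexp_cs by (simp add: cos_add sin_add cos_diff sin_diff complex_eq_iff field_simps)
lemma iexp_sin_id: "(2 + sin x) *\<^sub>R iexp y = 2 * iexp y + \<i> * iexp (- x + y) / 2 - \<i> * iexp (x + y) / 2"
  unfolding iexp_cs by (simp add: cos_add sin_add cos_diff sin_diff complex_eq_iff field_simps)
lemma iexp_split: "r *\<^sub>R iexp x = complex_of_real (r * cos x) + \<i> * complex_of_real (r * sin x)"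
  unfolding iexp_cs by (simp add: complex_eq_iff field_simps)

lemma cos_b: "1 \<le> 2 + cos x \<and> 2 + cos x \<le> (3::real)"
  by (smt (verit) cos_le_one cos_ge_minus_one)
lemma sin_b: "1 \<le> 2 + sin x \<and> 2 + sin x \<le> (3::real)"
  by (smt (verit) sin_le_one sin_ge_minus_one)

lemma int3c: fixes f g h :: "'a \<Rightarrow> complex"
  shows "integrable P f \<Longrightarrow> integrable P g \<Longrightarrow> integrable P h \<Longrightarrow>
  (\<integral>x. a * f x + g x / b + h x / c \<partial>P) = a * integral\<^sup>L P f + integral\<^sup>L P g / b + integral\<^sup>L P h / c"
  by simp
lemma int3s: fixes f g h :: "'a \<Rightarrow> complex"
  shows "integrable P f \<Longrightarrow> integrable P g \<Longrightarrow> integrable P h \<Longrightarrow>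
  (\<integral>x. a * f x + \<i> * g x / b - \<i> * h x / c \<partial>P) = a * integral\<^sup>L P f + \<i> * integral\<^sup>L P g / b - \<i> * integral\<^sup>L P h / c"
  by simp

lemma lin_integral:
  fixes P :: "'a measure" and A B A' B' :: "'a \<Rightarrow> real" and h :: "real \<Rightarrow> 'z::{banach, second_countable_topology}"
  assumes m[measurable]: "A \<in> borel_measurable P" "B \<in> borel_measurable P"
       "A' \<in> borel_measurable P" "B' \<in> borel_measurable P"
    and lin: "\<And>s t. distr P borel (\<lambda>\<omega>. s * A \<omega> + t * B \<omega>) = distr P borel (\<lambda>\<omega>. s * A' \<omega> + t * B' \<omega>)"
    and [measurable]: "h \<in> borel_measurable borel"
  shows "(\<integral>\<omega>. h (s * A \<omega> + t * B \<omega>) \<partial>P) = (\<integral>\<omega>. h (s * A' \<omega> + t * B' \<omega>) \<partial>P)"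
  proof -
    have "(\<integral>\<omega>. h (s * A \<omega> + t * B \<omega>) \<partial>P) = (\<integral>x. h x \<partial>distr P borel (\<lambda>\<omega>. s * A \<omega> + t * B \<omega>))"
      by (subst integral_distr) auto
    also have "\<dots> = (\<integral>x. h x \<partial>distr P borel (\<lambda>\<omega>. s * A' \<omega> + t * B' \<omega>))" by (simp only: lin)
    also have "\<dots> = (\<integral>\<omega>. h (s * A' \<omega> + t * B' \<omega>) \<partial>P)"
      by (subst integral_distr) auto
    finally show ?thesis .
  qed

lemma split_int:
  fixes P :: "'a measure" and A B :: "'a \<Rightarrow> real"
  assumes P: "prob_space P" and [measurable]: "A \<in> borel_measurable P" "B \<in> borel_measurable P"
    "k \<in> borel_measurable borel" and bk: "\<And>x. 0 \<le> k x \<and> k x \<le> 1"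
  shows "(CLINT \<omega>|P. (1 + k (B \<omega>)) *\<^sub>R iexp (u * A \<omega>)) = (CLINT \<omega>|P. iexp (u * A \<omega>))
     + complex_of_real (\<integral>\<omega>. cos (u * A \<omega>) * k (B \<omega>) \<partial>P) + \<i> * complex_of_real (\<integral>\<omega>. sin (u * A \<omega>) * k (B \<omega>) \<partial>P)"
proof -
  interpret prob_space P by (rule P)
  have bk': "\<bar>k x\<bar> \<le> 1" for x using bk[of x] by simp
  have i1: "integrable P (\<lambda>\<omega>. iexp (u * A \<omega>))"
    by (intro integrable_const_bound[where B=1]) auto
  have i2: "integrable P (\<lambda>\<omega>. cos (u * A \<omega>) * k (B \<omega>))" "integrable P (\<lambda>\<omega>. sin (u * A \<omega>) * k (B \<omega>))"
    by (auto intro!: integrable_const_bound[where B=1] AE_I2 simp: abs_mult mult_le_one bk')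
  have "(CLINT \<omega>|P. (1 + k (B \<omega>)) *\<^sub>R iexp (u * A \<omega>)) = (CLINT \<omega>|P. iexp (u * A \<omega>)
     + complex_of_real (cos (u * A \<omega>) * k (B \<omega>)) + \<i> * complex_of_real (sin (u * A \<omega>) * k (B \<omega>)))"
    by (intro Bochner_Integration.integral_cong refl) (simp only: iexp_cs, simp add: complex_eq_iff algebra_simps)
  also have "\<dots> = (CLINT \<omega>|P. iexp (u * A \<omega>))
     + complex_of_real (\<integral>\<omega>. cos (u * A \<omega>) * k (B \<omega>) \<partial>P) + \<i> * complex_of_real (\<integral>\<omega>. sin (u * A \<omega>) * k (B \<omega>) \<partial>P)"
  proof -
    have i3: "integrable P (\<lambda>\<omega>. complex_of_real (cos (u * A \<omega>) * k (B \<omega>)))"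
      "integrable P (\<lambda>\<omega>. \<i> * complex_of_real (sin (u * A \<omega>) * k (B \<omega>)))"
      using integrable_of_real[OF i2(1)] integrable_mult_right[OF integrable_of_real[OF i2(2)], of \<i>]
      by (simp_all del: of_real_mult)
    show ?thesis
      by (simp only: Bochner_Integration.integral_add[OF Bochner_Integration.integrable_add[OF i1 i3(1)] i3(2)]
        Bochner_Integration.integral_add[OF i1 i3(1)] integral_mult_right_zero integral_complex_of_real)
  qed
  finally show ?thesis .
qed

lemma pair_law:
  fixes P :: "'a measure" and A B A' B' :: "'a \<Rightarrow> real" and f k :: "real \<Rightarrow> real"
  assumes P: "prob_space P"
    and m[measurable]: "A \<in> borel_measurable P" "B \<in> borel_measurable P"
       "A' \<in> borel_measurable P" "B' \<in> borel_measurable P"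
    and lin: "\<And>s t. distr P borel (\<lambda>\<omega>. s * A \<omega> + t * B \<omega>) = distr P borel (\<lambda>\<omega>. s * A' \<omega> + t * B' \<omega>)"
    and mf[measurable]: "f \<in> borel_measurable borel" and bf: "\<And>x. \<bar>f x\<bar> \<le> d"
    and mk[measurable]: "k \<in> borel_measurable borel" and bk: "\<And>x. 0 \<le> k x \<and> k x \<le> 1"
  shows "(\<integral>\<omega>. f (A \<omega>) * k (B \<omega>) \<partial>P) = (\<integral>\<omega>. f (A' \<omega>) * k (B' \<omega>) \<partial>P)"
proof -
  interpret prob_space P by (rule P)
  note L = lin_integral[OF m lin]
  have Li: "\<And>s t. (CLINT \<omega>|P. iexp (s * A \<omega> + t * B \<omega>)) = (CLINT \<omega>|P. iexp (s * A' \<omega> + t * B' \<omega>))"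
    by (rule L) auto
  have intc: "integrable P (\<lambda>\<omega>. iexp (Y \<omega>))" if [measurable]: "Y \<in> borel_measurable P" for Y
    by (intro integrable_const_bound[where B=1]) auto
  have intb: "integrable P (\<lambda>\<omega>. u (Y \<omega>) * v (Y' \<omega>))"
    if [measurable]: "Y \<in> borel_measurable P" "Y' \<in> borel_measurable P" "u \<in> borel_measurable borel"
      "v \<in> borel_measurable borel" and "\<And>x. \<bar>u x\<bar> \<le> c1" "\<And>x. \<bar>v x\<bar> \<le> c2" for Y Y' and u v :: "real \<Rightarrow> real" and c1 c2 :: real
    using that by (intro integrable_const_bound[where B="c1 * c2"]) (auto simp: abs_mult intro!: mult_mono AE_I2 order_trans[OF abs_ge_zero])
  have step1: "(\<integral>\<omega>. cos (u * A \<omega>) * g (B \<omega>) \<partial>P) = (\<integral>\<omega>. cos (u * A' \<omega>) * g (B' \<omega>) \<partial>P)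
      \<and> (\<integral>\<omega>. sin (u * A \<omega>) * g (B \<omega>) \<partial>P) = (\<integral>\<omega>. sin (u * A' \<omega>) * g (B' \<omega>) \<partial>P)"
    if [measurable]: "g \<in> borel_measurable borel" and bg: "\<And>x. \<bar>g x\<bar> \<le> e" for u g e
  proof -
    have gB: "(\<integral>\<omega>. g (B \<omega>) \<partial>P) = (\<integral>\<omega>. g (B' \<omega>) \<partial>P)"
      using L[of g 0 1] by simp
    have c: "(\<integral>\<omega>. (2 + cos (u * A \<omega>)) * g (B \<omega>) \<partial>P) = (\<integral>\<omega>. (2 + cos (u * A' \<omega>)) * g (B' \<omega>) \<partial>P)"
    proof (rule tilt[OF P, where c=3 and d=e and X=B and X'=B' and h=g])
      fix t
      have "(CLINT \<omega>|P. (2 + cos (u * A \<omega>)) *\<^sub>R iexp (t * B \<omega>)) =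
         (CLINT \<omega>|P. 2 * iexp (0 * A \<omega> + t * B \<omega>) + iexp (u * A \<omega> + t * B \<omega>) / 2 + iexp ((-u) * A \<omega> + t * B \<omega>) / 2)"
        by (intro Bochner_Integration.integral_cong refl, subst iexp_cos_id) simp
      also have "\<dots> = 2 * (CLINT \<omega>|P. iexp (0 * A \<omega> + t * B \<omega>)) + (CLINT \<omega>|P. iexp (u * A \<omega> + t * B \<omega>)) / 2 + (CLINT \<omega>|P. iexp ((-u) * A \<omega> + t * B \<omega>)) / 2"
        by (rule int3c; rule intc; simp)
      also have "\<dots> = 2 * (CLINT \<omega>|P. iexp (0 * A' \<omega> + t * B' \<omega>)) + (CLINT \<omega>|P. iexp (u * A' \<omega> + t * B' \<omega>)) / 2 + (CLINT \<omega>|P. iexp ((-u) * A' \<omega> + t * B' \<omega>)) / 2"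
        by (simp only: Li)
      also have "\<dots> = (CLINT \<omega>|P. (2 + cos (u * A' \<omega>)) *\<^sub>R iexp (t * B' \<omega>))"
        by (subst int3c[symmetric], (rule intc; simp)+, intro Bochner_Integration.integral_cong refl, subst iexp_cos_id) simp
      finally show "(CLINT \<omega>|P. (2 + cos (u * A \<omega>)) *\<^sub>R iexp (t * B \<omega>)) = (CLINT \<omega>|P. (2 + cos (u * A' \<omega>)) *\<^sub>R iexp (t * B' \<omega>))" .
    qed (auto simp: bg cos_b sin_b)
    have s: "(\<integral>\<omega>. (2 + sin (u * A \<omega>)) * g (B \<omega>) \<partial>P) = (\<integral>\<omega>. (2 + sin (u * A' \<omega>)) * g (B' \<omega>) \<partial>P)"
    proof (rule tilt[OF P, where c=3 and d=e and X=B and X'=B' and h=g])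
      fix t
      have "(CLINT \<omega>|P. (2 + sin (u * A \<omega>)) *\<^sub>R iexp (t * B \<omega>)) =
         (CLINT \<omega>|P. 2 * iexp (0 * A \<omega> + t * B \<omega>) + \<i> * iexp ((-u) * A \<omega> + t * B \<omega>) / 2 - \<i> * iexp (u * A \<omega> + t * B \<omega>) / 2)"
        by (intro Bochner_Integration.integral_cong refl, subst iexp_sin_id) simp
      also have "\<dots> = 2 * (CLINT \<omega>|P. iexp (0 * A \<omega> + t * B \<omega>)) + \<i> * (CLINT \<omega>|P. iexp ((-u) * A \<omega> + t * B \<omega>)) / 2 - \<i> * (CLINT \<omega>|P. iexp (u * A \<omega> + t * B \<omega>)) / 2"
        by (rule int3s; rule intc; simp)
      also have "\<dots> = 2 * (CLINT \<omega>|P. iexp (0 * A' \<omega> + t * B' \<omega>)) + \<i> * (CLINT \<omega>|P. iexp ((-u) * A' \<omega> + t * B' \<omega>)) / 2 - \<i> * (CLINT \<omega>|P. iexp (u * A' \<omega> + t * B' \<omega>)) / 2"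
        by (simp only: Li)
      also have "\<dots> = (CLINT \<omega>|P. (2 + sin (u * A' \<omega>)) *\<^sub>R iexp (t * B' \<omega>))"
        by (subst int3s[symmetric], (rule intc; simp)+, intro Bochner_Integration.integral_cong refl, subst iexp_sin_id) simp
      finally show "(CLINT \<omega>|P. (2 + sin (u * A \<omega>)) *\<^sub>R iexp (t * B \<omega>)) = (CLINT \<omega>|P. (2 + sin (u * A' \<omega>)) *\<^sub>R iexp (t * B' \<omega>))" .
    qed (auto simp: bg cos_b sin_b)
    have ig: "integrable P (\<lambda>\<omega>. g (B \<omega>))" "integrable P (\<lambda>\<omega>. g (B' \<omega>))"
      by (auto intro!: integrable_const_bound[where B=e] simp: bg)
    have ic: "integrable P (\<lambda>\<omega>. cos (u * A \<omega>) * g (B \<omega>))" "integrable P (\<lambda>\<omega>. cos (u * A' \<omega>) * g (B' \<omega>))"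
         "integrable P (\<lambda>\<omega>. sin (u * A \<omega>) * g (B \<omega>))" "integrable P (\<lambda>\<omega>. sin (u * A' \<omega>) * g (B' \<omega>))"
      using intb[of A B "\<lambda>x. cos (u*x)" g 1 e] intb[of A' B' "\<lambda>x. cos (u*x)" g 1 e]
        intb[of A B "\<lambda>x. sin (u*x)" g 1 e] intb[of A' B' "\<lambda>x. sin (u*x)" g 1 e]
      by (auto simp: bg)
    show ?thesis using c s gB by (simp add: distrib_right ig ic)
  qed
  have bk': "\<bar>k x\<bar> \<le> 1" for x using bk[of x] by simp
  have t2: "(\<integral>\<omega>. (1 + k (B \<omega>)) * f (A \<omega>) \<partial>P) = (\<integral>\<omega>. (1 + k (B' \<omega>)) * f (A' \<omega>) \<partial>P)"
  proof (rule tilt[OF P, where c=2 and d=d and X=A and X'=A' and h=f])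
    fix t
    have e0: "(CLINT \<omega>|P. iexp (t * A \<omega>)) = (CLINT \<omega>|P. iexp (t * A' \<omega>))"
      using Li[of t 0] by simp
    show "(CLINT \<omega>|P. (1 + k (B \<omega>)) *\<^sub>R iexp (t * A \<omega>)) = (CLINT \<omega>|P. (1 + k (B' \<omega>)) *\<^sub>R iexp (t * A' \<omega>))"
      using split_int[OF P m(1,2) mk bk, of t] split_int[OF P m(3,4) mk bk, of t] step1[OF mk bk', of t] e0
      by simp
  qed (auto simp: bf bk add_increasing)
  have fA: "(\<integral>\<omega>. f (A \<omega>) \<partial>P) = (\<integral>\<omega>. f (A' \<omega>) \<partial>P)"
    using L[of f 1 0] by simp
  have ifA: "integrable P (\<lambda>\<omega>. f (A \<omega>))" "integrable P (\<lambda>\<omega>. f (A' \<omega>))"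
    by (auto intro!: integrable_const_bound[where B=d] simp: bf)
  have ikf: "integrable P (\<lambda>\<omega>. k (B \<omega>) * f (A \<omega>))" "integrable P (\<lambda>\<omega>. k (B' \<omega>) * f (A' \<omega>))"
    using intb[of B A k f 1 d] intb[of B' A' k f 1 d] by (auto simp: bk' bf)
  have "(\<integral>\<omega>. f (A \<omega>) * k (B \<omega>) \<partial>P) = (\<integral>\<omega>. (1 + k (B \<omega>)) * f (A \<omega>) \<partial>P) - (\<integral>\<omega>. f (A \<omega>) \<partial>P)"
    "(\<integral>\<omega>. f (A' \<omega>) * k (B' \<omega>) \<partial>P) = (\<integral>\<omega>. (1 + k (B' \<omega>)) * f (A' \<omega>) \<partial>P) - (\<integral>\<omega>. f (A' \<omega>) \<partial>P)"
    by (simp_all add: distrib_right ifA ikf, simp_all only: mult.commute)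
  then show ?thesis using t2 fA by simp
qed





lemma beta_bounds:
  assumes "0 \<le> u" "u \<le> 1" "M > 0"
  shows "0 \<le> beta1_inv_cdf M u \<and> beta1_inv_cdf M u \<le> 1"
proof -
  have "(1 - u) powr (1 / M) \<le> 1" using assms by (intro powr_le1) auto
  moreover have "0 \<le> (1 - u) powr (1 / M)" by simp
  ultimately show ?thesis by (simp add: beta1_inv_cdf_def)
qed

lemma beta_integral:
  assumes M: "M > 0"
  shows "(LBINT u=0..1. beta1_inv_cdf M u) = 1 / (M + 1)"
proof -
  define F where "F u = u + M / (M + 1) * (1 - u) powr ((M + 1) / M)" for u :: real
  have "(LBINT u=ereal 0..ereal 1. beta1_inv_cdf M u) = F 1 - F 0"
  proof (rule interval_integral_FTC_nonneg)
    fix x assume x: "ereal 0 < ereal x" "ereal x < ereal 1"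
    then have "0 < 1 - x" by simp
    show "DERIV F x :> beta1_inv_cdf M x"
      unfolding F_def beta1_inv_cdf_def using x M
      apply (auto intro!: derivative_eq_intros)
      apply (rule arg_cong[where f="\<lambda>e. (1 - x) powr e"])
      apply (simp add: field_simps)
      done
    show "isCont (beta1_inv_cdf M) x"
      unfolding beta1_inv_cdf_def using x by (auto intro!: continuous_intros)
  next
    show "AE x in lborel. ereal 0 < ereal x \<longrightarrow> ereal x < ereal 1 \<longrightarrow> 0 \<le> beta1_inv_cdf M x"
      using beta_bounds M by (auto intro!: AE_I2)
    show "((F \<circ> real_of_ereal) \<longlongrightarrow> F 0) (at_right (ereal 0))"
      unfolding ereal_tendsto_simps1 F_def using M
      by (auto intro!: tendsto_eq_intros)
    show "((F \<circ> real_of_ereal) \<longlongrightarrow> F 1) (at_left (ereal 1))"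
      unfolding ereal_tendsto_simps1 F_def using M
      apply (auto intro!: tendsto_eq_intros tendsto_zero_powrI eventually_at_leftI[where b=0])
      by (rule eventually_at_leftI[where a=0]) auto
  qed simp
  then show ?thesis using M by (simp add: F_def field_simps zero_ereal_def one_ereal_def)
qed

lemma marginal:
  fixes P :: "'a measure" and Zx :: "'a \<Rightarrow> real"
  assumes P: "prob_space P" and s: "\<sigma> > 0" and M: "M > 0"
    and dist: "distributed P lborel Zx (normal_density 0 \<sigma>)"
  shows "(\<integral>\<omega>. beta1_inv_cdf M (Phi_normal \<sigma> (Zx \<omega>)) \<partial>P) = 1 / (M + 1)"
proof -
  define N where "N = density lborel (normal_density 0 \<sigma>)"
  have rd: "real_distribution N"
    unfolding N_def real_distribution_def real_distribution_axioms_def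
    using prob_space_normal_density[OF s] by simp
  interpret C: cdf_distribution N by (rule cdf_distribution.intro[OF rd])
  have PhiC: "Phi_normal \<sigma> = cdf N" by (auto simp: Phi_normal_def N_def)
  have mZ[measurable]: "Zx \<in> borel_measurable P"
    using distributed_measurable[OF dist] by simp
  have [measurable]: "cdf N \<in> borel_measurable borel" by (rule C.measurable_C)
  have mb[measurable]: "beta1_inv_cdf M \<in> borel_measurable borel"
    unfolding beta1_inv_cdf_def by measurable
  have "(\<integral>\<omega>. beta1_inv_cdf M (Phi_normal \<sigma> (Zx \<omega>)) \<partial>P) = (\<integral>z. beta1_inv_cdf M (cdf N z) \<partial>distr P lborel Zx)"
    by (subst integral_distr) (auto simp: PhiC)
  also have "\<dots> = (\<integral>z. beta1_inv_cdf M (cdf N z) \<partial>N)"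
    using distributed_distr_eq_density[OF dist] by (simp add: N_def)
  also have "\<dots> = (\<integral>z. beta1_inv_cdf M (cdf N z) \<partial>distr (restrict_space lborel {0<..<1::real}) borel (\<lambda>\<omega>. Inf {x. \<omega> \<le> cdf N x}))"
    by (simp add: C.distr_I_eq_M)
  also have "\<dots> = (\<integral>u. beta1_inv_cdf M (cdf N (Inf {x. u \<le> cdf N x})) \<partial>restrict_space lborel {0<..<1::real})"
    by (subst integral_distr) auto
  also have "\<dots> = (\<integral>u. beta1_inv_cdf M u \<partial>restrict_space lborel {0<..<1::real})"
  proof (intro Bochner_Integration.integral_cong refl)
    fix u assume "u \<in> space (restrict_space lborel {0<..<1::real})"
    then have u: "0 < u" "u < 1" by (auto simp: space_restrict_space)
    have cont: "isCont (cdf N) x" for x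
    proof -
      have "measure N {x} = 0" unfolding N_def measure_def by (simp add: emeasure_density)
      then show ?thesis by (simp add: C.isCont_cdf)
    qed
    let ?i = "Inf {x. u \<le> cdf N x}"
    have pi: "u \<le> cdf N x \<longleftrightarrow> ?i \<le> x" for x using C.pseudoinverse[OF u] .
    have 1: "u \<le> cdf N ?i" by (rule iffD2[OF pi]) simp
    have 2: "cdf N ?i \<le> u"
    proof (rule tendsto_upperbound)
      show "(cdf N \<longlongrightarrow> cdf N ?i) (at_left ?i)"
        using cont[of ?i] unfolding isCont_def by (rule filterlim_mono) (simp_all add: at_le)
      show "\<forall>\<^sub>F x in at_left ?i. cdf N x \<le> u"
      proof (rule eventually_at_leftI[where a="?i - 1"])
        fix x assume "x \<in> {?i - 1<..<?i}"
        then have "\<not> ?i \<le> x" by simp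
        then have "\<not> u \<le> cdf N x" by (subst pi)
        then show "cdf N x \<le> u" by simp
      qed simp
    qed simp
    show "beta1_inv_cdf M (cdf N (Inf {x. u \<le> cdf N x})) = beta1_inv_cdf M u"
      using 1 2 by simp
  qed
  also have "\<dots> = (LBINT u=0..1. beta1_inv_cdf M u)"
  proof -
    have e: "einterval 0 1 = {0<..<1::real}" by (auto simp: einterval_def)
    show ?thesis
      unfolding interval_lebesgue_integral_def set_lebesgue_integral_def e
      by (subst integral_restrict_space) auto
  qed
  also have "\<dots> = 1 / (M + 1)" by (rule beta_integral[OF M])
  finally show ?thesis .
qed




definition cA :: "nat \<Rightarrow> nat \<Rightarrow> nat \<Rightarrow> real" where
  "cA j k l = (if l < j then 1 else if l = j then 0 else if l < k then 1 else 0)"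
definition cB :: "nat \<Rightarrow> nat \<Rightarrow> nat \<Rightarrow> real" where
  "cB j k l = (if l < j then -1 else if l = j then 1 else 0)"
definition cC :: "nat \<Rightarrow> nat \<Rightarrow> nat \<Rightarrow> real" where
  "cC j k l = (if l < j then -1 else if l = j then 0 else if l < k then -1 else 1)"
definition cD :: "nat \<Rightarrow> nat \<Rightarrow> nat \<Rightarrow> real" where
  "cD j k l = (if l < j then 1 else if l = j then -1 else 0)"

lemma prod_split4:
  fixes f :: "nat \<Rightarrow> real"
  assumes "1 \<le> j" "j < k"
  shows "(\<Prod>l\<in>{1..k}. f l) = (\<Prod>l\<in>{1..<j}. f l) * f j * (\<Prod>l\<in>{Suc j..<k}. f l) * f k"
proof -
  have "(\<Prod>l\<in>{1..k}. f l) = (\<Prod>l\<in>{1..<Suc k}. f l)"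
    by (simp add: atLeastLessThanSuc_atLeastAtMost)
  also have "\<dots> = (\<Prod>l\<in>{1..<k}. f l) * f k" using assms by (simp add: prod.atLeastLessThan_Suc)
  also have "(\<Prod>l\<in>{1..<k}. f l) = (\<Prod>l\<in>{1..<j}. f l) * (\<Prod>l\<in>{j..<k}. f l)"
    using assms by (simp add: prod.atLeastLessThan_concat)
  also have "(\<Prod>l\<in>{j..<k}. f l) = f j * (\<Prod>l\<in>{Suc j..<k}. f l)"
    using assms by (simp add: prod.atLeast_Suc_lessThan)
  finally show ?thesis by (simp add: mult.assoc)
qed

lemma prod_split2:
  fixes f :: "nat \<Rightarrow> real"
  assumes "1 \<le> j"
  shows "(\<Prod>l\<in>{1..j}. f l) = (\<Prod>l\<in>{1..<j}. f l) * f j"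
proof -
  have "{1..j} = insert j {1..<j}" using assms by auto
  then show ?thesis by (simp add: mult.commute)
qed

lemma prod_pointwise:
  fixes a b :: "nat \<Rightarrow> real"
  assumes "1 \<le> j" "j < k"
  shows "(a j * (\<Prod>l\<in>{1..<j}. 1 - a l)) * (b k * (\<Prod>l\<in>{1..<k}. 1 - b l))
    = (\<Prod>l\<in>{1..k}. cA j k l + cB j k l * a l + cC j k l * b l + cD j k l * (a l * b l))"
proof -
  have bk: "(\<Prod>l\<in>{1..<k}. 1 - b l) = (\<Prod>l\<in>{1..<j}. 1 - b l) * (1 - b j) * (\<Prod>l\<in>{Suc j..<k}. 1 - b l)"
  proof -
    have "(\<Prod>l\<in>{1..<k}. 1 - b l) = (\<Prod>l\<in>{1..<j}. 1 - b l) * (\<Prod>l\<in>{j..<k}. 1 - b l)"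
      using assms by (simp add: prod.atLeastLessThan_concat)
    also have "(\<Prod>l\<in>{j..<k}. 1 - b l) = (1 - b j) * (\<Prod>l\<in>{Suc j..<k}. 1 - b l)"
      using assms by (simp add: prod.atLeast_Suc_lessThan)
    finally show ?thesis by (simp add: mult.assoc)
  qed
  have p1: "(\<Prod>l\<in>{1..<j}. cA j k l + cB j k l * a l + cC j k l * b l + cD j k l * (a l * b l))
      = (\<Prod>l\<in>{1..<j}. 1 - a l) * (\<Prod>l\<in>{1..<j}. 1 - b l)"
    unfolding prod.distrib[symmetric]
    by (intro prod.cong refl) (auto simp: cA_def cB_def cC_def cD_def algebra_simps)
  have p2: "(\<Prod>l\<in>{Suc j..<k}. cA j k l + cB j k l * a l + cC j k l * b l + cD j k l * (a l * b l))
      = (\<Prod>l\<in>{Suc j..<k}. 1 - b l)"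
    by (intro prod.cong refl) (auto simp: cA_def cB_def cC_def cD_def algebra_simps)
  show ?thesis
    unfolding prod_split4[OF assms] p1 p2 bk using assms
    by (simp add: cA_def cB_def cC_def cD_def algebra_simps)
qed

lemma prod_pointwise_diag:
  fixes a b :: "nat \<Rightarrow> real"
  assumes "1 \<le> j"
  shows "(a j * (\<Prod>l\<in>{1..<j}. 1 - a l)) * (b j * (\<Prod>l\<in>{1..<j}. 1 - b l))
    = (\<Prod>l\<in>{1..j}. (if l < j then 1 else 0) + (if l < j then -1 else 0) * a l + (if l < j then -1 else 0) * b l + 1 * (a l * b l))"
proof -
  have p1: "(\<Prod>l\<in>{1..<j}. (if l < j then 1 else 0) + (if l < j then -1 else 0) * a l + (if l < j then -1 else 0) * b l + 1 * (a l * b l))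
      = (\<Prod>l\<in>{1..<j}. 1 - a l) * (\<Prod>l\<in>{1..<j}. 1 - b l)"
    unfolding prod.distrib[symmetric]
    by (intro prod.cong refl) (auto simp: algebra_simps)
  show ?thesis
    unfolding prod_split2[OF assms] p1
    by (simp add: algebra_simps)
qed

lemma prod_val4:
  fixes A B C D :: real
  assumes "1 \<le> j" "j < k"
  shows "(\<Prod>l\<in>{1..k}. (if l < j then A else if l = j then B else if l < k then C else D)) = A ^ (j - 1) * B * C ^ (k - j - 1) * D"
proof -
  have p1: "(\<Prod>l\<in>{1..<j}. (if l < j then A else if l = j then B else if l < k then C else D)) = A ^ (j - 1)"
    by (subst prod.cong[OF refl, where h="\<lambda>_. A"]) auto
  have p2: "(\<Prod>l\<in>{Suc j..<k}. (if l < j then A else if l = j then B else if l < k then C else D)) = C ^ (k - j - 1)"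
    by (subst prod.cong[OF refl, where h="\<lambda>_. C"]) auto
  show ?thesis unfolding prod_split4[OF assms] p1 p2 using assms by simp
qed

lemma prod_val2:
  fixes A B :: real
  assumes "1 \<le> j"
  shows "(\<Prod>l\<in>{1..j}. (if l < j then A else B)) = A ^ (j - 1) * B"
proof -
  have p1: "(\<Prod>l\<in>{1..<j}. (if l < j then A else B)) = A ^ (j - 1)"
    by (subst prod.cong[OF refl, where h="\<lambda>_. A"]) auto
  show ?thesis unfolding prod_split2[OF assms] p1 by simp
qed

lemma telescope:
  fixes a :: "nat \<Rightarrow> real"
  shows "(\<Sum>j\<in>{1..n}. a j * (\<Prod>l\<in>{1..<j}. 1 - a l)) = 1 - (\<Prod>l\<in>{1..n}. 1 - a l)"
proof (induction n)
  case 0 then show ?case by simp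
next
  case (Suc n)
  have "{1..Suc n} = insert (Suc n) {1..n}" by auto
  moreover have "{1..<Suc n} = {1..n}" by auto
  ultimately show ?case using Suc by (simp add: algebra_simps)
qed




lemma Phi_props:
  assumes s: "\<sigma> > 0"
  shows "mono (Phi_normal \<sigma>)" "0 \<le> Phi_normal \<sigma> z" "Phi_normal \<sigma> z \<le> 1"
    "Phi_normal \<sigma> \<in> borel_measurable borel"
proof -
  define N where "N = density lborel (normal_density 0 \<sigma>)"
  have rd: "real_distribution N"
    unfolding N_def real_distribution_def real_distribution_axioms_def
    using prob_space_normal_density[OF s] by simp
  interpret C: cdf_distribution N by (rule cdf_distribution.intro[OF rd])
  have PhiC: "Phi_normal \<sigma> = cdf N" by (auto simp: Phi_normal_def N_def)
  show "mono (Phi_normal \<sigma>)" unfolding PhiC by (rule C.mono)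
  show "0 \<le> Phi_normal \<sigma> z" unfolding PhiC by (rule C.cdf_nonneg)
  show "Phi_normal \<sigma> z \<le> 1" unfolding PhiC by (rule C.cdf_bounded_prob)
  show "Phi_normal \<sigma> \<in> borel_measurable borel" unfolding PhiC by (rule C.measurable_C)
qed

lemma gp_single:
  assumes gp: "centered_gaussian_process P S Z C" and x: "x \<in> S" and v: "C x x \<noteq> 0"
  shows "distributed P lborel (Z x) (normal_density 0 (sqrt (C x x)))"
proof -
  have H: "\<forall>xs cs. set xs \<subseteq> S \<longrightarrow> length cs = length xs \<longrightarrow>
        (let L = (\<lambda>\<omega>. \<Sum>i<length xs. cs ! i * Z (xs ! i) \<omega>);
             v = (\<Sum>i<length xs. \<Sum>l<length xs. cs ! i * cs ! l * C (xs ! i) (xs ! l))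
         in if v = 0 then (AE \<omega> in P. L \<omega> = 0)
            else distributed P lborel L (normal_density 0 (sqrt v)))"
    using gp unfolding centered_gaussian_process_def by blast
  note H[rule_format, of "[x]" "[1]"]
  then show ?thesis using v x by (simp add: Let_def)
qed

lemma gp_pair:
  fixes s t :: real
  assumes gp: "centered_gaussian_process P S Z C" and x: "X1 \<in> S" "X2 \<in> S"
  shows "if s * s * C X1 X1 + s * t * C X1 X2 + (t * s * C X2 X1 + t * t * C X2 X2) = 0 then (AE \<omega> in P. s * Z X1 \<omega> + t * Z X2 \<omega> = 0)
            else distributed P lborel (\<lambda>\<omega>. s * Z X1 \<omega> + t * Z X2 \<omega>) (normal_density 0 (sqrt (s * s * C X1 X1 + s * t * C X1 X2 + (t * s * C X2 X1 + t * t * C X2 X2))))"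
proof -
  have H: "\<forall>xs cs. set xs \<subseteq> S \<longrightarrow> length cs = length xs \<longrightarrow>
        (let L = (\<lambda>\<omega>. \<Sum>i<length xs. cs ! i * Z (xs ! i) \<omega>);
             v = (\<Sum>i<length xs. \<Sum>l<length xs. cs ! i * cs ! l * C (xs ! i) (xs ! l))
         in if v = 0 then (AE \<omega> in P. L \<omega> = 0)
            else distributed P lborel L (normal_density 0 (sqrt v)))"
    using gp unfolding centered_gaussian_process_def by blast
  note H[rule_format, of "[X1, X2]" "[s, t]"]
  then show ?thesis using x by (simp add: Let_def numeral_2_eq_2 lessThan_Suc ac_simps)
qed

lemma gp_distr_eq:
  assumes gp: "centered_gaussian_process P S Z C" and gp': "centered_gaussian_process P S Z' C"
    and x: "X1 \<in> S" "X2 \<in> S"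
  shows "distr P borel (\<lambda>\<omega>. s * Z X1 \<omega> + t * Z X2 \<omega>) = distr P borel (\<lambda>\<omega>. s * Z' X1 \<omega> + t * Z' X2 \<omega>)"
proof -
  have m[measurable]: "Z X1 \<in> borel_measurable P" "Z X2 \<in> borel_measurable P"
    "Z' X1 \<in> borel_measurable P" "Z' X2 \<in> borel_measurable P"
    using gp gp' x unfolding centered_gaussian_process_def by auto
  define v where "v \<equiv> s * s * C X1 X1 + s * t * C X1 X2 + (t * s * C X2 X1 + t * t * C X2 X2)"
  note g1 = gp_pair[OF gp x, of s t, folded v_def]
  note g2 = gp_pair[OF gp' x, of s t, folded v_def]
  show ?thesis
  proof (cases "v = 0")
    case True
    then have a1: "AE \<omega> in P. s * Z X1 \<omega> + t * Z X2 \<omega> = 0" and a2: "AE \<omega> in P. s * Z' X1 \<omega> + t * Z' X2 \<omega> = 0"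
      using g1 g2 by auto
    have "distr P borel (\<lambda>\<omega>. s * Z X1 \<omega> + t * Z X2 \<omega>) = distr P borel (\<lambda>\<omega>. 0)"
      using a1 by (intro distr_cong_AE) auto
    also have "\<dots> = distr P borel (\<lambda>\<omega>. s * Z' X1 \<omega> + t * Z' X2 \<omega>)"
      using a2 by (intro distr_cong_AE) auto
    finally show ?thesis .
  next
    case False
    then have d1: "distributed P lborel (\<lambda>\<omega>. s * Z X1 \<omega> + t * Z X2 \<omega>) (normal_density 0 (sqrt v))"
      and d2: "distributed P lborel (\<lambda>\<omega>. s * Z' X1 \<omega> + t * Z' X2 \<omega>) (normal_density 0 (sqrt v))"
      using g1 g2 by auto
    have "distr P borel (\<lambda>\<omega>. s * Z X1 \<omega> + t * Z X2 \<omega>) = distr P lborel (\<lambda>\<omega>. s * Z X1 \<omega> + t * Z X2 \<omega>)"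
      by (intro distr_cong) auto
    also have "\<dots> = distr P lborel (\<lambda>\<omega>. s * Z' X1 \<omega> + t * Z' X2 \<omega>)"
      using distributed_distr_eq_density[OF d1] distributed_distr_eq_density[OF d2] by simp
    also have "\<dots> = distr P borel (\<lambda>\<omega>. s * Z' X1 \<omega> + t * Z' X2 \<omega>)"
      by (intro distr_cong) auto
    finally show ?thesis .
  qed
qed




theorem propositionS4:
  fixes P :: "'a measure"
    and \<X> :: "real set" and M \<sigma>Z :: real and K :: "real \<Rightarrow> real"
    and Z :: "nat \<Rightarrow> real \<Rightarrow> 'a \<Rightarrow> real"
    and X1 X2 :: real and Y1 Y2 :: "'a \<Rightarrow> nat" and \<mu> :: real
  assumes "prob_space P"
    and "M > 0" and "\<sigma>Z > 0"
    and "K 0 = 1"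
    and "\<And>j. j \<ge> 1 \<Longrightarrow> centered_gaussian_process P \<X> (Z j) (\<lambda>x y. \<sigma>Z\<^sup>2 * K (x - y))"
    and "prob_space.indep_vars P (\<lambda>_. Pi\<^sub>M \<X> (\<lambda>_. borel))
           (\<lambda>j \<omega>. restrict (\<lambda>x. Z j x \<omega>) \<X>) {1..}"
    and "X1 \<in> \<X>" and "X2 \<in> \<X>"
    and "Y1 \<in> measurable P (count_space UNIV)" and "Y2 \<in> measurable P (count_space UNIV)"
    and "\<And>A j k. A \<in> dgem_sigma P M \<sigma>Z Z \<X> \<Longrightarrow> j \<ge> 1 \<Longrightarrow> k \<ge> 1 \<Longrightarrow>
           measure P (A \<inter> {\<omega> \<in> space P. Y1 \<omega> = j \<and> Y2 \<omega> = k}) =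
           (\<integral>\<omega>. indicator A \<omega> * (dgem_p M \<sigma>Z Z j X1 \<omega> * dgem_p M \<sigma>Z Z k X2 \<omega>) \<partial>P)"
    and "\<mu> = (M + 1)\<^sup>2 * (\<integral>\<omega>. dgem_V M \<sigma>Z Z 1 X1 \<omega> * dgem_V M \<sigma>Z Z 1 X2 \<omega> \<partial>P)"
  shows "(\<forall>j k. j \<ge> 1 \<longrightarrow> k \<ge> 1 \<longrightarrow> j \<noteq> k \<longrightarrow>
            measure P {\<omega> \<in> space P. Y1 \<omega> = j \<and> Y2 \<omega> = k} =
              (M + 1 - \<mu>) * M ^ (max j k - min j k - 1) * (M\<^sup>2 - 1 + \<mu>) ^ (min j k - 1)
              / (M + 1) ^ (j + k))
       \<and> (\<forall>j. j \<ge> 1 \<longrightarrow>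
            measure P {\<omega> \<in> space P. Y1 \<omega> = j \<and> Y2 \<omega> = j} =
              \<mu> * (M\<^sup>2 - 1 + \<mu>) ^ (j - 1) / (M + 1) ^ (2 * j))
       \<and> measure P {\<omega> \<in> space P. Y1 \<omega> = Y2 \<omega>} = \<mu> / (2 * M + 2 - \<mu>)"
proof -
  interpret prob_space P by (rule assms(1))
  have M: "M > 0" and sZ: "\<sigma>Z > 0" using assms(2,3) .
  have X12: "X1 \<in> \<X>" "X2 \<in> \<X>" using assms(7,8) .
  define q where "q = M + 1"
  have q: "q > 0" using M by (simp add: q_def)
  define G where "G = (\<lambda>z. beta1_inv_cdf M (Phi_normal \<sigma>Z z))"
  have mPhi[measurable]: "Phi_normal \<sigma>Z \<in> borel_measurable borel" by (rule Phi_props(4)[OF sZ])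
  have mG[measurable]: "G \<in> borel_measurable borel"
    unfolding G_def beta1_inv_cdf_def by measurable
  have G01: "0 \<le> G z \<and> G z \<le> 1" for z
    unfolding G_def by (rule beta_bounds[OF Phi_props(2,3)[OF sZ] M])
  have Gabs: "\<bar>G z\<bar> \<le> 1" for z using G01[of z] by simp
  have V: "dgem_V M \<sigma>Z Z l x \<omega> = G (Z l x \<omega>)" for l x \<omega> by (simp add: dgem_V_def G_def)
  have GP: "centered_gaussian_process P \<X> (Z l) (\<lambda>x y. \<sigma>Z\<^sup>2 * K (x - y))" if "1 \<le> l" for l
    using assms(5) that .
  have mZ: "Z l x \<in> borel_measurable P" if "1 \<le> l" "x \<in> \<X>" for l x
    using GP[OF that(1)] that(2) unfolding centered_gaussian_process_def by blast
  have EV: "(\<integral>\<omega>. G (Z l x \<omega>) \<partial>P) = 1 / q" if l: "1 \<le> l" and x: "x \<in> \<X>" for l x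
  proof -
    have "distributed P lborel (Z l x) (normal_density 0 (sqrt (\<sigma>Z\<^sup>2 * K (x - x))))"
      by (rule gp_single[OF GP[OF l] x]) (use sZ assms(4) in simp)
    then have "distributed P lborel (Z l x) (normal_density 0 \<sigma>Z)"
      using sZ assms(4) by simp
    from marginal[OF assms(1) sZ M this] show ?thesis by (simp add: G_def q_def)
  qed
  have EVV: "(\<integral>\<omega>. G (Z l X1 \<omega>) * G (Z l X2 \<omega>) \<partial>P) = \<mu> / q\<^sup>2" if l: "1 \<le> l" for l
  proof -
    have "(\<integral>\<omega>. G (Z l X1 \<omega>) * G (Z l X2 \<omega>) \<partial>P) = (\<integral>\<omega>. G (Z 1 X1 \<omega>) * G (Z 1 X2 \<omega>) \<partial>P)"
      by (rule pair_law[OF assms(1) mZ[OF l X12(1)] mZ[OF l X12(2)] mZ[OF _ X12(1)] mZ[OF _ X12(2)]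
           gp_distr_eq[OF GP[OF l] GP X12] mG Gabs mG G01]) simp_all
    also have "\<dots> = \<mu> / q\<^sup>2" using assms(12) q by (simp add: V q_def)
    finally show ?thesis .
  qed
  have E1: "(\<integral>\<omega>. a + b * G (Z l X1 \<omega>) + c * G (Z l X2 \<omega>) + d * (G (Z l X1 \<omega>) * G (Z l X2 \<omega>)) \<partial>P)
      = a + b / q + c / q + d * (\<mu> / q\<^sup>2)" if l: "1 \<le> l" for l a b c d
  proof -
    have [measurable]: "Z l X1 \<in> borel_measurable P" "Z l X2 \<in> borel_measurable P"
      using mZ[OF l X12(1)] mZ[OF l X12(2)] .
    have i1: "integrable P (\<lambda>\<omega>. G (Z l x \<omega>))" if "x \<in> \<X>" for x
      using mZ[OF l that] by (intro integrable_const_bound[where B=1]) (auto simp: Gabs)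
    have i2: "integrable P (\<lambda>\<omega>. G (Z l X1 \<omega>) * G (Z l X2 \<omega>))"
      by (intro integrable_const_bound[where B=1]) (auto simp: abs_mult intro!: mult_le_one Gabs)
    show ?thesis
      using i1[OF X12(1)] i1[OF X12(2)] i2 EV[OF l X12(1)] EV[OF l X12(2)] EVV[OF l]
      by (simp add: prob_space)
  qed
  have IND: "(\<integral>\<omega>. (\<Prod>l\<in>J. \<alpha> l + \<beta> l * G (Z l X1 \<omega>) + \<gamma> l * G (Z l X2 \<omega>) + \<delta> l * (G (Z l X1 \<omega>) * G (Z l X2 \<omega>))) \<partial>P)
      = (\<Prod>l\<in>J. \<alpha> l + \<beta> l / q + \<gamma> l / q + \<delta> l * (\<mu> / q\<^sup>2))"
    if J: "finite J" "J \<subseteq> {1..}" for J and \<alpha> \<beta> \<gamma> \<delta> :: "nat \<Rightarrow> real"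
  proof -
    define Y where "Y l = (\<lambda>f::real\<Rightarrow>real. \<alpha> l + \<beta> l * G (f X1) + \<gamma> l * G (f X2) + \<delta> l * (G (f X1) * G (f X2)))" for l
    have "indep_vars (\<lambda>_. borel) (\<lambda>l \<omega>. Y l (restrict (\<lambda>x. Z l x \<omega>) \<X>)) {1..}"
    proof (rule indep_vars_compose2[OF assms(6)])
      fix l :: nat
      show "Y l \<in> Pi\<^sub>M \<X> (\<lambda>_. borel) \<rightarrow>\<^sub>M borel"
        unfolding Y_def using X12 by measurable
    qed
    then have ind: "indep_vars (\<lambda>_. borel) (\<lambda>l \<omega>. \<alpha> l + \<beta> l * G (Z l X1 \<omega>) + \<gamma> l * G (Z l X2 \<omega>) + \<delta> l * (G (Z l X1 \<omega>) * G (Z l X2 \<omega>))) J"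
      using J(2) X12 by (subst indep_vars_cong[OF refl _ refl]) (auto simp: Y_def intro: indep_vars_subset)
    have int: "integrable P (\<lambda>\<omega>. \<alpha> l + \<beta> l * G (Z l X1 \<omega>) + \<gamma> l * G (Z l X2 \<omega>) + \<delta> l * (G (Z l X1 \<omega>) * G (Z l X2 \<omega>)))"
      if "l \<in> J" for l
    proof -
      have l: "1 \<le> l" using that J by auto
      have [measurable]: "Z l X1 \<in> borel_measurable P" "Z l X2 \<in> borel_measurable P"
        using mZ[OF l X12(1)] mZ[OF l X12(2)] .
      have g1: "\<bar>y\<bar> * \<bar>G z\<bar> \<le> \<bar>y\<bar>" for y z by (simp add: mult_left_le Gabs)
      have g2: "\<bar>y\<bar> * (\<bar>G z\<bar> * \<bar>G z'\<bar>) \<le> \<bar>y\<bar>" for y z z'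
        by (simp add: mult_left_le Gabs mult_le_one)
      show ?thesis
        by (intro integrable_const_bound[where B="\<bar>\<alpha> l\<bar> + \<bar>\<beta> l\<bar> + \<bar>\<gamma> l\<bar> + \<bar>\<delta> l\<bar>"] AE_I2)
          (auto intro!: abs_triangle_ineq[THEN order_trans] add_mono
             simp: abs_mult g1 g2)
    qed
    show ?thesis
      using J by (simp add: indep_vars_lebesgue_integral[OF J(1) ind int] E1 subset_eq)
  qed
  have pj: "dgem_p M \<sigma>Z Z j x \<omega> = G (Z j x \<omega>) * (\<Prod>l\<in>{1..<j}. 1 - G (Z l x \<omega>))" for j x \<omega>
    by (simp add: dgem_p_def V)
  have PY: "measure P {\<omega> \<in> space P. Y1 \<omega> = j \<and> Y2 \<omega> = k} = (\<integral>\<omega>. dgem_p M \<sigma>Z Z j X1 \<omega> * dgem_p M \<sigma>Z Z k X2 \<omega> \<partial>P)"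
    if "1 \<le> j" "1 \<le> k" for j k
  proof -
    have "space P \<in> dgem_sigma P M \<sigma>Z Z \<X>" unfolding dgem_sigma_def by (rule sigma_sets_top)
    from assms(11)[OF this that] show ?thesis
      by (simp add: Int_absorb1) (intro Bochner_Integration.integral_cong refl, simp)
  qed
  define cc where "cc = 1 - 2 / q + \<mu> / q\<^sup>2"
  define B0 where "B0 = 1 / q - \<mu> / q\<^sup>2"
  have OFF: "(\<integral>\<omega>. dgem_p M \<sigma>Z Z j X1 \<omega> * dgem_p M \<sigma>Z Z k X2 \<omega> \<partial>P)
      = cc ^ (j - 1) * B0 * (1 - 1 / q) ^ (k - j - 1) * (1 / q)" if jk: "1 \<le> j" "j < k" for j k
  proof -
    have "(\<integral>\<omega>. dgem_p M \<sigma>Z Z j X1 \<omega> * dgem_p M \<sigma>Z Z k X2 \<omega> \<partial>P)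
       = (\<integral>\<omega>. (\<Prod>l\<in>{1..k}. cA j k l + cB j k l * G (Z l X1 \<omega>) + cC j k l * G (Z l X2 \<omega>) + cD j k l * (G (Z l X1 \<omega>) * G (Z l X2 \<omega>))) \<partial>P)"
      unfolding pj by (subst prod_pointwise[OF jk]) (rule refl)
    also have "\<dots> = (\<Prod>l\<in>{1..k}. cA j k l + cB j k l / q + cC j k l / q + cD j k l * (\<mu> / q\<^sup>2))"
      by (rule IND) auto
    also have "\<dots> = (\<Prod>l\<in>{1..k}. (if l < j then cc else if l = j then B0 else if l < k then 1 - 1 / q else 1 / q))"
      by (intro prod.cong refl) (auto simp: cA_def cB_def cC_def cD_def cc_def B0_def)
    also have "\<dots> = cc ^ (j - 1) * B0 * (1 - 1 / q) ^ (k - j - 1) * (1 / q)"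
      by (rule prod_val4[OF jk])
    finally show ?thesis .
  qed
  have OFF2: "(\<integral>\<omega>. dgem_p M \<sigma>Z Z j X1 \<omega> * dgem_p M \<sigma>Z Z k X2 \<omega> \<partial>P)
      = cc ^ (k - 1) * B0 * (1 - 1 / q) ^ (j - k - 1) * (1 / q)" if jk: "1 \<le> k" "k < j" for j k
  proof -
    have "(\<integral>\<omega>. dgem_p M \<sigma>Z Z j X1 \<omega> * dgem_p M \<sigma>Z Z k X2 \<omega> \<partial>P)
       = (\<integral>\<omega>. (\<Prod>l\<in>{1..j}. cA k j l + cC k j l * G (Z l X1 \<omega>) + cB k j l * G (Z l X2 \<omega>) + cD k j l * (G (Z l X1 \<omega>) * G (Z l X2 \<omega>))) \<partial>P)"
    proof (intro Bochner_Integration.integral_cong refl)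
      fix \<omega>
      have "dgem_p M \<sigma>Z Z j X1 \<omega> * dgem_p M \<sigma>Z Z k X2 \<omega> = dgem_p M \<sigma>Z Z k X2 \<omega> * dgem_p M \<sigma>Z Z j X1 \<omega>"
        by simp
      also have "\<dots> = (\<Prod>l\<in>{1..j}. cA k j l + cB k j l * G (Z l X2 \<omega>) + cC k j l * G (Z l X1 \<omega>) + cD k j l * (G (Z l X2 \<omega>) * G (Z l X1 \<omega>)))"
        unfolding pj by (rule prod_pointwise[OF jk])
      also have "\<dots> = (\<Prod>l\<in>{1..j}. cA k j l + cC k j l * G (Z l X1 \<omega>) + cB k j l * G (Z l X2 \<omega>) + cD k j l * (G (Z l X1 \<omega>) * G (Z l X2 \<omega>)))"
        by (intro prod.cong refl) (simp add: ac_simps)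
      finally show "dgem_p M \<sigma>Z Z j X1 \<omega> * dgem_p M \<sigma>Z Z k X2 \<omega> = \<dots>" .
    qed
    also have "\<dots> = (\<Prod>l\<in>{1..j}. cA k j l + cC k j l / q + cB k j l / q + cD k j l * (\<mu> / q\<^sup>2))"
      by (rule IND) auto
    also have "\<dots> = (\<Prod>l\<in>{1..j}. (if l < k then cc else if l = k then B0 else if l < j then 1 - 1 / q else 1 / q))"
      by (intro prod.cong refl) (auto simp: cA_def cB_def cC_def cD_def cc_def B0_def)
    also have "\<dots> = cc ^ (k - 1) * B0 * (1 - 1 / q) ^ (j - k - 1) * (1 / q)"
      by (rule prod_val4[OF jk])
    finally show ?thesis .
  qed
  have DIAG: "(\<integral>\<omega>. dgem_p M \<sigma>Z Z j X1 \<omega> * dgem_p M \<sigma>Z Z j X2 \<omega> \<partial>P) = cc ^ (j - 1) * (\<mu> / q\<^sup>2)"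
    if j: "1 \<le> j" for j
  proof -
    have "(\<integral>\<omega>. dgem_p M \<sigma>Z Z j X1 \<omega> * dgem_p M \<sigma>Z Z j X2 \<omega> \<partial>P)
       = (\<integral>\<omega>. (\<Prod>l\<in>{1..j}. (if l < j then 1 else 0) + (if l < j then -1 else 0) * G (Z l X1 \<omega>) + (if l < j then -1 else 0) * G (Z l X2 \<omega>) + 1 * (G (Z l X1 \<omega>) * G (Z l X2 \<omega>))) \<partial>P)"
      unfolding pj by (subst prod_pointwise_diag[OF j]) (rule refl)
    also have "\<dots> = (\<Prod>l\<in>{1..j}. (if l < j then 1 else 0) + (if l < j then -1 else 0) / q + (if l < j then -1 else 0) / q + 1 * (\<mu> / q\<^sup>2))"
      by (rule IND[of "{1..j}" "\<lambda>l. if l < j then 1 else 0" "\<lambda>l. if l < j then -1 else 0" "\<lambda>l. if l < j then -1 else 0" "\<lambda>_. 1"]) auto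
    also have "\<dots> = (\<Prod>l\<in>{1..j}. (if l < j then cc else \<mu> / q\<^sup>2))"
      by (intro prod.cong refl) (auto simp: cc_def)
    also have "\<dots> = cc ^ (j - 1) * (\<mu> / q\<^sup>2)"
      by (rule prod_val2[OF j])
    finally show ?thesis .
  qed
  have ccv: "cc = (M\<^sup>2 - 1 + \<mu>) / q\<^sup>2"
  proof -
    have "cc = (q\<^sup>2 - 2 * q + \<mu>) / q\<^sup>2" using q by (simp add: cc_def field_simps power2_eq_square)
    also have "q\<^sup>2 - 2 * q = M\<^sup>2 - 1" by (simp add: q_def power2_eq_square algebra_simps)
    finally show ?thesis by simp
  qed
  have B0v: "B0 = (M + 1 - \<mu>) / q\<^sup>2"
  proof -
    have "B0 = (q - \<mu>) / q\<^sup>2" using q by (simp add: B0_def field_simps power2_eq_square)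
    then show ?thesis by (simp add: q_def)
  qed
  have Mq: "1 - 1 / q = M / q" using q by (simp add: q_def field_simps)
  have alg: "((c / q\<^sup>2) ^ a * (b0 / q\<^sup>2) * (M / q) ^ b * (1 / q)) = b0 * M ^ b * c ^ a / q ^ (2 * a + b + 3)"
    for a b :: nat and c b0 :: real
    using q by (simp add: power_divide power_mult power_add field_simps power2_eq_square power3_eq_cube)
  have C1: "measure P {\<omega> \<in> space P. Y1 \<omega> = j \<and> Y2 \<omega> = k} =
              (M + 1 - \<mu>) * M ^ (max j k - min j k - 1) * (M\<^sup>2 - 1 + \<mu>) ^ (min j k - 1)
              / (M + 1) ^ (j + k)" if jk: "1 \<le> j" "1 \<le> k" "j \<noteq> k" for j k
  proof (cases "j < k")
    case True
    have e: "j + k = 2 * (j - 1) + (k - j - 1) + 3" using True jk by simp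
    have "measure P {\<omega> \<in> space P. Y1 \<omega> = j \<and> Y2 \<omega> = k} = cc ^ (j - 1) * B0 * (1 - 1 / q) ^ (k - j - 1) * (1 / q)"
      using True jk by (simp add: PY OFF)
    also have "\<dots> = (M + 1 - \<mu>) * M ^ (k - j - 1) * (M\<^sup>2 - 1 + \<mu>) ^ (j - 1) / q ^ (2 * (j - 1) + (k - j - 1) + 3)"
      unfolding ccv B0v Mq alg ..
    also have "\<dots> = (M + 1 - \<mu>) * M ^ (max j k - min j k - 1) * (M\<^sup>2 - 1 + \<mu>) ^ (min j k - 1) / (M + 1) ^ (j + k)"
      unfolding e[symmetric] q_def using True by (simp add: max_def min_def)
    finally show ?thesis .
  next
    case False
    then have kj: "k < j" using jk by simp
    have e: "j + k = 2 * (k - 1) + (j - k - 1) + 3" using kj jk by simp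
    have "measure P {\<omega> \<in> space P. Y1 \<omega> = j \<and> Y2 \<omega> = k} = cc ^ (k - 1) * B0 * (1 - 1 / q) ^ (j - k - 1) * (1 / q)"
      using kj jk by (simp add: PY OFF2)
    also have "\<dots> = (M + 1 - \<mu>) * M ^ (j - k - 1) * (M\<^sup>2 - 1 + \<mu>) ^ (k - 1) / q ^ (2 * (k - 1) + (j - k - 1) + 3)"
      unfolding ccv B0v Mq alg ..
    also have "\<dots> = (M + 1 - \<mu>) * M ^ (max j k - min j k - 1) * (M\<^sup>2 - 1 + \<mu>) ^ (min j k - 1) / (M + 1) ^ (j + k)"
      unfolding e[symmetric] q_def using kj by (simp add: max_def min_def)
    finally show ?thesis .
  qed
  have C2: "measure P {\<omega> \<in> space P. Y1 \<omega> = j \<and> Y2 \<omega> = j} =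
              \<mu> * (M\<^sup>2 - 1 + \<mu>) ^ (j - 1) / (M + 1) ^ (2 * j)" if j: "1 \<le> j" for j
  proof -
    have e: "2 * j = 2 * (j - 1) + 2" using j by simp
    have alg2: "(c / q\<^sup>2) ^ a * (m / q\<^sup>2) = m * c ^ a / q ^ (2 * a + 2)" for a :: nat and c m :: real
      using q by (simp add: power_divide power_mult power_add field_simps power2_eq_square)
    have "measure P {\<omega> \<in> space P. Y1 \<omega> = j \<and> Y2 \<omega> = j} = cc ^ (j - 1) * (\<mu> / q\<^sup>2)"
      using j by (simp add: PY DIAG)
    also have "\<dots> = \<mu> * (M\<^sup>2 - 1 + \<mu>) ^ (j - 1) / q ^ (2 * (j - 1) + 2)"
      unfolding ccv alg2 ..
    finally show ?thesis unfolding e[symmetric] q_def .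
  qed
  note mY[measurable] = assms(9) assms(10)
  have Aset: "{\<omega> \<in> space P. Y1 \<omega> = j \<and> Y2 \<omega> = k} \<in> sets P" for j k by measurable
  have q1: "1 < q" using M by (simp add: q_def)
  have [measurable]: "Z 1 X1 \<in> borel_measurable P" "Z 1 X2 \<in> borel_measurable P"
    using mZ[OF _ X12(1)] mZ[OF _ X12(2)] by auto
  have cc_nn: "0 \<le> cc"
  proof -
    have "cc = (\<integral>\<omega>. 1 + (-1) * G (Z 1 X1 \<omega>) + (-1) * G (Z 1 X2 \<omega>) + 1 * (G (Z 1 X1 \<omega>) * G (Z 1 X2 \<omega>)) \<partial>P)"
      using E1[of 1 1 "-1" "-1" 1] by (simp add: cc_def)
    also have "\<dots> \<ge> 0"
    proof (intro Bochner_Integration.integral_nonneg)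
      fix \<omega>
      have "0 \<le> (1 - G (Z 1 X1 \<omega>)) * (1 - G (Z 1 X2 \<omega>))" using G01 by simp
      then show "0 \<le> 1 + (-1) * G (Z 1 X1 \<omega>) + (-1) * G (Z 1 X2 \<omega>) + 1 * (G (Z 1 X1 \<omega>) * G (Z 1 X2 \<omega>))"
        by (simp add: algebra_simps)
    qed
    finally show ?thesis .
  qed
  have B0_nn: "0 \<le> B0"
  proof -
    have "B0 = (\<integral>\<omega>. 0 + 1 * G (Z 1 X1 \<omega>) + 0 * G (Z 1 X2 \<omega>) + (-1) * (G (Z 1 X1 \<omega>) * G (Z 1 X2 \<omega>)) \<partial>P)"
      using E1[of 1 0 1 0 "-1"] by (simp add: B0_def)
    also have "\<dots> \<ge> 0"
    proof (intro Bochner_Integration.integral_nonneg)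
      fix \<omega>
      have "0 \<le> G (Z 1 X1 \<omega>) * (1 - G (Z 1 X2 \<omega>))" using G01 by simp
      then show "0 \<le> 0 + 1 * G (Z 1 X1 \<omega>) + 0 * G (Z 1 X2 \<omega>) + (-1) * (G (Z 1 X1 \<omega>) * G (Z 1 X2 \<omega>))"
        by (simp add: algebra_simps)
    qed
    finally show ?thesis .
  qed
  have cc_lt: "cc < 1"
  proof -
    have "cc = 1 - 1 / q - B0" by (simp add: cc_def B0_def)
    moreover have "0 < 1 / q" using q by simp
    ultimately show ?thesis using B0_nn by linarith
  qed
  have mu_nn: "0 \<le> \<mu> / q\<^sup>2"
  proof -
    have "0 \<le> (\<integral>\<omega>. G (Z 1 X1 \<omega>) * G (Z 1 X2 \<omega>) \<partial>P)" by (intro Bochner_Integration.integral_nonneg) (simp add: G01)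
    then show ?thesis using EVV[of 1] by simp
  qed
  define T where "T = {\<omega> \<in> space P. 1 \<le> Y1 \<omega> \<and> 1 \<le> Y2 \<omega>}"
  have Tm: "T \<in> sets P" unfolding T_def by measurable
  have mZx: "Z l x \<in> borel_measurable P" if "1 \<le> l" "x \<in> {X1, X2}" for l x
    using mZ[OF that(1)] that(2) X12 by auto
  have mp: "(\<lambda>\<omega>. dgem_p M \<sigma>Z Z j x \<omega>) \<in> borel_measurable P" if "1 \<le> j" "x \<in> {X1, X2}" for j x
    unfolding pj using that
    by (intro borel_measurable_times borel_measurable_prod measurable_compose[OF mZx mG] borel_measurable_diff) auto
  have Gp: "0 \<le> G (Z j x \<omega>) * (\<Prod>l\<in>{1..<j}. 1 - G (Z l x \<omega>)) \<and> G (Z j x \<omega>) * (\<Prod>l\<in>{1..<j}. 1 - G (Z l x \<omega>)) \<le> 1" for j x \<omega>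
  proof -
    have "0 \<le> (\<Prod>l\<in>{1..<j}. 1 - G (Z l x \<omega>))" by (intro prod_nonneg) (simp add: G01)
    moreover have "(\<Prod>l\<in>{1..<j}. 1 - G (Z l x \<omega>)) \<le> 1" by (intro prod_le_1) (simp add: G01)
    ultimately show ?thesis using G01[of "Z j x \<omega>"] by (simp add: mult_le_one)
  qed
  have intB: "integrable P f" if "f \<in> borel_measurable P" "\<And>\<omega>. \<omega> \<in> space P \<Longrightarrow> \<bar>f \<omega>\<bar> \<le> 1" for f :: "'a \<Rightarrow> real"
    by (rule integrable_const_bound[where B=1]) (use that in \<open>auto intro!: AE_I2\<close>)
  have mPA: "(\<lambda>\<omega>. \<Prod>l\<in>{1..n}. 1 - G (Z l x \<omega>)) \<in> borel_measurable P" if "x \<in> {X1, X2}" for n x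
    using that by (intro borel_measurable_prod measurable_compose[OF mZx mG] borel_measurable_diff) auto
  have PAb: "0 \<le> (\<Prod>l\<in>J. 1 - G (Z l x \<omega>)) \<and> (\<Prod>l\<in>J. 1 - G (Z l x \<omega>)) \<le> 1" for J x \<omega>
    by (simp add: G01 prod_nonneg prod_le_1)
  have PAabs: "\<bar>\<Prod>l\<in>J. 1 - G (Z l x \<omega>)\<bar> \<le> 1" for J x \<omega>
    by (simp add: abs_of_nonneg PAb)
  have LB: "1 - 2 * (1 - 1 / q) ^ n + cc ^ n \<le> measure P T" for n
  proof -
    define S where "S = {1..n} \<times> {1..n}"
    define B where "B = (\<lambda>(j, k). {\<omega> \<in> space P. Y1 \<omega> = j \<and> Y2 \<omega> = k})"
    let ?PA = "\<lambda>\<omega>. \<Prod>l\<in>{1..n}. 1 - G (Z l X1 \<omega>)"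
    let ?PB = "\<lambda>\<omega>. \<Prod>l\<in>{1..n}. 1 - G (Z l X2 \<omega>)"
    have "measure P (\<Union>i\<in>S. B i) = (\<Sum>i\<in>S. measure P (B i))"
      by (rule finite_measure_finite_Union) (auto simp: S_def B_def disjoint_family_on_def Aset split: prod.splits)
    also have "\<dots> = (\<Sum>j\<in>{1..n}. \<Sum>k\<in>{1..n}. (\<integral>\<omega>. dgem_p M \<sigma>Z Z j X1 \<omega> * dgem_p M \<sigma>Z Z k X2 \<omega> \<partial>P))"
      unfolding S_def sum.cartesian_product B_def by (intro sum.cong refl) (auto simp: PY)
    also have "\<dots> = (\<integral>\<omega>. (\<Sum>j\<in>{1..n}. dgem_p M \<sigma>Z Z j X1 \<omega>) * (\<Sum>k\<in>{1..n}. dgem_p M \<sigma>Z Z k X2 \<omega>) \<partial>P)"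
    proof -
      have ii: "integrable P (\<lambda>\<omega>. dgem_p M \<sigma>Z Z j X1 \<omega> * dgem_p M \<sigma>Z Z k X2 \<omega>)" if "j \<in> {1..n}" "k \<in> {1..n}" for j k
        using that by (intro intB borel_measurable_times mp) (auto simp: pj abs_mult Gabs PAabs intro!: mult_le_one)
      show ?thesis unfolding sum_product
        by (subst Bochner_Integration.integral_sum, (intro Bochner_Integration.integrable_sum ii; simp), intro sum.cong refl,
            subst Bochner_Integration.integral_sum, (rule ii; simp), rule refl)
    qed
    also have "\<dots> = (\<integral>\<omega>. 1 - ?PA \<omega> - ?PB \<omega> + ?PA \<omega> * ?PB \<omega> \<partial>P)"
      unfolding pj telescope by (intro Bochner_Integration.integral_cong refl) (simp add: algebra_simps)
    also have "\<dots> = 1 - (\<integral>\<omega>. ?PA \<omega> \<partial>P) - (\<integral>\<omega>. ?PB \<omega> \<partial>P) + (\<integral>\<omega>. ?PA \<omega> * ?PB \<omega> \<partial>P)"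
    proof -
      have i1: "integrable P ?PA" "integrable P ?PB" "integrable P (\<lambda>\<omega>. ?PA \<omega> * ?PB \<omega>)"
      proof -
        have m1: "?PA \<in> borel_measurable P" using mPA[of X1 n] by simp
        have m2: "?PB \<in> borel_measurable P" using mPA[of X2 n] by simp
        show "integrable P ?PA" by (rule intB[OF m1]) (simp add: PAabs)
        show "integrable P ?PB" by (rule intB[OF m2]) (simp add: PAabs)
        show "integrable P (\<lambda>\<omega>. ?PA \<omega> * ?PB \<omega>)"
          by (rule intB[OF borel_measurable_times[OF m1 m2]]) (simp add: abs_mult PAabs mult_le_one)
      qed
      show ?thesis using i1 by (simp add: prob_space)
    qed
    also have "\<dots> = 1 - (1 - 1 / q) ^ n - (1 - 1 / q) ^ n + cc ^ n"
    proof -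
      have "(\<integral>\<omega>. ?PA \<omega> \<partial>P) = (\<integral>\<omega>. (\<Prod>l\<in>{1..n}. 1 + (-1) * G (Z l X1 \<omega>) + 0 * G (Z l X2 \<omega>) + 0 * (G (Z l X1 \<omega>) * G (Z l X2 \<omega>))) \<partial>P)"
        by simp
      also have "\<dots> = (1 - 1 / q) ^ n"
        by (subst IND[of "{1..n}" "\<lambda>_. 1" "\<lambda>_. -1" "\<lambda>_. 0" "\<lambda>_. 0"]) auto
      finally have a: "(\<integral>\<omega>. ?PA \<omega> \<partial>P) = (1 - 1 / q) ^ n" .
      have "(\<integral>\<omega>. ?PB \<omega> \<partial>P) = (\<integral>\<omega>. (\<Prod>l\<in>{1..n}. 1 + 0 * G (Z l X1 \<omega>) + (-1) * G (Z l X2 \<omega>) + 0 * (G (Z l X1 \<omega>) * G (Z l X2 \<omega>))) \<partial>P)"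
        by simp
      also have "\<dots> = (1 - 1 / q) ^ n"
        by (subst IND[of "{1..n}" "\<lambda>_. 1" "\<lambda>_. 0" "\<lambda>_. -1" "\<lambda>_. 0"]) auto
      finally have b: "(\<integral>\<omega>. ?PB \<omega> \<partial>P) = (1 - 1 / q) ^ n" .
      have "(\<integral>\<omega>. ?PA \<omega> * ?PB \<omega> \<partial>P) = (\<integral>\<omega>. (\<Prod>l\<in>{1..n}. 1 + (-1) * G (Z l X1 \<omega>) + (-1) * G (Z l X2 \<omega>) + 1 * (G (Z l X1 \<omega>) * G (Z l X2 \<omega>))) \<partial>P)"
        by (simp add: prod.distrib[symmetric] algebra_simps)
      also have "\<dots> = cc ^ n"
        by (subst IND[of "{1..n}" "\<lambda>_. 1" "\<lambda>_. -1" "\<lambda>_. -1" "\<lambda>_. 1"]) (auto simp: cc_def)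
      finally have c: "(\<integral>\<omega>. ?PA \<omega> * ?PB \<omega> \<partial>P) = cc ^ n" .
      show ?thesis using a b c by simp
    qed
    finally have eq: "measure P (\<Union>i\<in>S. B i) = 1 - 2 * (1 - 1 / q) ^ n + cc ^ n" by simp
    have "(\<Union>i\<in>S. B i) \<subseteq> T" by (auto simp: S_def B_def T_def)
    then have "measure P (\<Union>i\<in>S. B i) \<le> measure P T" using Tm by (rule finite_measure_mono)
    then show ?thesis using eq by simp
  qed
  have T1: "measure P T = 1"
  proof (rule antisym)
    show "measure P T \<le> 1" by (rule prob_le_1)
    have lim: "(\<lambda>n. 1 - 2 * (1 - 1 / q) ^ n) \<longlonglongrightarrow> 1 - 2 * 0"
      using q1 by (intro tendsto_intros LIMSEQ_power_zero) auto
    show "1 \<le> measure P T"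
    proof (rule tendsto_upperbound[OF lim[simplified]])
      show "\<forall>\<^sub>F n in sequentially. 1 - 2 * (1 - 1 / q) ^ n \<le> measure P T"
        using LB cc_nn by (intro always_eventually allI) (smt (verit) zero_le_power)
    qed simp
  qed
  define A where "A n = {\<omega> \<in> space P. Y1 \<omega> = Suc n \<and> Y2 \<omega> = Suc n}" for n
  have Ui: "(\<lambda>n. measure P (A n)) sums measure P (\<Union>n. A n)"
    by (rule finite_measure_UNION) (auto simp: A_def Aset disjoint_family_on_def)
  have An: "measure P (A n) = (\<mu> / q\<^sup>2) * cc ^ n" for n
    unfolding A_def using DIAG[of "Suc n"] PY[of "Suc n" "Suc n"] by simp
  have "(\<lambda>n. (\<mu> / q\<^sup>2) * cc ^ n) sums ((\<mu> / q\<^sup>2) * (1 / (1 - cc)))"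
    by (intro sums_mult geometric_sums) (use cc_nn cc_lt in simp)
  with Ui An have U: "measure P (\<Union>n. A n) = (\<mu> / q\<^sup>2) * (1 / (1 - cc))"
    by (simp add: sums_unique2)
  define D where "D = {\<omega> \<in> space P. Y1 \<omega> = Y2 \<omega>}"
  have Dm: "D \<in> sets P"
  proof -
    have "D = (\<Union>n. {\<omega> \<in> space P. Y1 \<omega> = n \<and> Y2 \<omega> = n})" by (auto simp: D_def)
    then show ?thesis using Aset by auto
  qed
  have Um: "(\<Union>n. A n) \<in> sets P" unfolding A_def using Aset by auto
  have UD: "(\<Union>n. A n) \<subseteq> D" by (auto simp: A_def D_def)
  have DU: "D \<subseteq> (\<Union>n. A n) \<union> (space P - T)"
  proof
    fix \<omega> assume "\<omega> \<in> D"
    then show "\<omega> \<in> (\<Union>n. A n) \<union> (space P - T)"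
      by (cases "Y1 \<omega>") (auto simp: A_def D_def T_def intro: sym)
  qed
  have "measure P (space P - T) = 0" using T1 Tm by (simp add: prob_compl)
  then have "measure P D \<le> measure P (\<Union>n. A n)"
    using finite_measure_mono[OF DU] measure_subadditive[OF Um, of "space P - T"] Tm Um by (auto simp: emeasure_eq_measure)
  moreover have "measure P (\<Union>n. A n) \<le> measure P D" using finite_measure_mono[OF UD Dm] .
  ultimately have DD: "measure P D = (\<mu> / q\<^sup>2) * (1 / (1 - cc))" using U by simp
  have fin: "(\<mu> / q\<^sup>2) * (1 / (1 - cc)) = \<mu> / (2 * M + 2 - \<mu>)"
  proof -
    have h: "1 - cc = (2 * q - \<mu>) / q\<^sup>2" using q by (simp add: cc_def field_simps power2_eq_square)
    have "0 < 1 - cc" using cc_lt by simp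
    then have nz: "2 * q - \<mu> \<noteq> 0" unfolding h by auto
    have "(\<mu> / q\<^sup>2) * (1 / (1 - cc)) = \<mu> / (2 * q - \<mu>)"
      unfolding h using q nz by (simp add: field_simps)
    also have "2 * q - \<mu> = 2 * M + 2 - \<mu>" by (simp add: q_def)
    finally show ?thesis .
  qed
  show ?thesis using C1 C2 DD fin by (simp add: D_def)
qed


end
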